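(* Let $n$ be even, and for $m\ge1$ let $\mathcal{C}_m=\mathbb{C}\{e_1,\dots,e_m\}$ denote the complex Clifford algebra with generators satisfying $e_j^2=-1$, $e_je_k=-e_ke_j$ ($j\ne k$), of dimension $2^m$, with $\mathcal{C}_n\subset\mathcal{C}_{n+2}$ naturally. Suppose there is an invertible $2^{n/2}\times2^{n/2}$ matrix $P_n$ over $\mathcal{C}_n$, not depending on $a$, such that for every $a\in\mathcal{C}_n$ the matrix $\phi_n(a):=P_n(aI_{2^{n/2}})P_n^{-1}$ has all entries in $\mathbb{C}$. Let $e_{[n]}=e_1\cdots e_n$, $e_{[n+1]}=e_1\cdots e_{n+1}=e_{[n]}e_{n+1}$, $\mu_{n+2}=(e_{[n]}e_{n+1})(e_{[n]}e_{n+2})$ and $r=(-1)^{\frac12(n+1)(n+2)}$; then $(e_{[n]}e_{n+1})^2=(e_{[n]}e_{n+2})^2=r$ and $\mu_{n+2}=-(e_{[n]}e_{n+2})(e_{[n]}e_{n+1})$. Fix a square root $\sqrt r\in\mathbb{C}$. Then every $a\in\mathcal{C}_{n+2}$ can be written as $$a=a_0+a_1e_{[n]}e_{n+1}+a_2e_{[n]}e_{n+2}+a_3\mu_{n+2}$$ with $a_0,\dots,a_3\in\mathcal{C}_n$. Let $N=2^{(n+2)/2}$ and $$P_{n+2}=\frac12\begin{pmatrix}(1+\frac1{\sqrt r}e_{[n+1]})P_n & (e_{[n]}e_{n+2}-\frac1{\sqrt r}\mu_{n+2})P_n\\ \frac1r(e_{[n]}e_{n+2}+\frac1{\sqrt r}\mu_{n+2})P_n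 & (1-\frac1{\sqrt r}e_{[n+1]})P_n\end{pmatrix},$$ $$P_{n+2}'=\frac12\begin{pmatrix}P_n^{-1}(1+\frac1{\sqrt r}e_{[n+1]}) & P_n^{-1}(e_{[n]}e_{n+2}-\frac1{\sqrt r}\mu_{n+2})\\ P_n^{-1}\frac1r(e_{[n]}e_{n+2}+\frac1{\sqrt r}\mu_{n+2}) & P_n^{-1}(1-\frac1{\sqrt r}e_{[n+1]})\end{pmatrix}.$$ Then $P_{n+2}$ is invertible with $P_{n+2}^{-1}=P_{n+2}'$, and $$P_{n+2}(aI_N)P_{n+2}^{-1}=\begin{pmatrix}\phi_n(a_0)+\sqrt r\,\phi_n(a_1) & r[\phi_n(a_2)+\sqrt r\,\phi_n(a_3)]\\ \phi_n(a_2)-\sqrt r\,\phi_n(a_3) & \phi_n(a_0)-\sqrt r\,\phi_n(a_1)\end{pmatrix}\in\mathbb{C}^{N\times N}.$$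
   Context: For an element $c$ and a matrix $M$, $cM$ (resp. $Mc$) denotes the matrix with entries $cM_{jk}$ (resp. $M_{jk}c$). Complex scalars commute with all Clifford elements. *)

theory Defs
  imports Complex_Main
begin

text \<open>An element is a complex-valued function on finite sets of indices
(basis blades): the blade A = {a1 < ... < ak} stands for e_a1 e_a2 ... e_ak.\<close>

type_synonym cl = "nat set \<Rightarrow> complex"

definition in_C :: "nat \<Rightarrow> cl \<Rightarrow> bool" where
  "in_C m a \<longleftrightarrow> (\<forall>A. a A \<noteq> 0 \<longrightarrow> A \<subseteq> {1..m})"

definition cl_scalar :: "complex \<Rightarrow> cl" where
  "cl_scalar c = (\<lambda>A. if A = {} then c else 0)"

definition cl_is_scalar :: "cl \<Rightarrow> bool" where
  "cl_is_scalar x \<longleftrightarrow> (\<forall>A. A \<noteq> {} \<longrightarrow> x A = 0)"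

definition cl_gen :: "nat \<Rightarrow> cl" where
  "cl_gen j = (\<lambda>A. if A = {j} then 1 else 0)"

definition cl_add :: "cl \<Rightarrow> cl \<Rightarrow> cl" where
  "cl_add a b = (\<lambda>A. a A + b A)"

definition cl_sub :: "cl \<Rightarrow> cl \<Rightarrow> cl" where
  "cl_sub a b = (\<lambda>A. a A - b A)"

definition cl_smul :: "complex \<Rightarrow> cl \<Rightarrow> cl" where
  "cl_smul c a = (\<lambda>A. c * a A)"

text \<open>Sign of the product of blades e_A e_B (using e_j^2 = -1 and
anticommutation of distinct generators).\<close>
definition bsign :: "nat set \<Rightarrow> nat set \<Rightarrow> complex" where
  "bsign A B = (-1) ^ (card {(i, j). i \<in> A \<and> j \<in> B \<and> j < i} + card (A \<inter> B))"

definition cl_mult :: "cl \<Rightarrow> cl \<Rightarrow> cl" where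
  "cl_mult a b = (\<lambda>C. \<Sum>A\<in>{A. a A \<noteq> 0}. \<Sum>B\<in>{B. b B \<noteq> 0}.
      if (A - B) \<union> (B - A) = C then bsign A B * a A * b B else 0)"

fun ebar :: "nat \<Rightarrow> cl" where
  "ebar 0 = cl_scalar 1"
| "ebar (Suc k) = cl_mult (ebar k) (cl_gen (Suc k))"

definition E1 :: "nat \<Rightarrow> cl" where "E1 n = cl_mult (ebar n) (cl_gen (n + 1))"
definition E2 :: "nat \<Rightarrow> cl" where "E2 n = cl_mult (ebar n) (cl_gen (n + 2))"
definition mu :: "nat \<Rightarrow> cl" where "mu n = cl_mult (E1 n) (E2 n)"

type_synonym clmat = "nat \<Rightarrow> nat \<Rightarrow> cl"

definition mmul :: "nat \<Rightarrow> clmat \<Rightarrow> clmat \<Rightarrow> clmat" where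
  "mmul d M N = (\<lambda>i k. (\<lambda>A. \<Sum>j<d. cl_mult (M i j) (N j k) A))"

definition mdiag :: "cl \<Rightarrow> clmat" where
  "mdiag a = (\<lambda>i j. if i = j then a else cl_scalar 0)"

definition meq :: "nat \<Rightarrow> clmat \<Rightarrow> clmat \<Rightarrow> bool" where
  "meq d M N \<longleftrightarrow> (\<forall>i<d. \<forall>j<d. M i j = N i j)"

definition mat_in_C :: "nat \<Rightarrow> nat \<Rightarrow> clmat \<Rightarrow> bool" where
  "mat_in_C m d M \<longleftrightarrow> (\<forall>i<d. \<forall>j<d. in_C m (M i j))"

definition mat_scalar :: "nat \<Rightarrow> clmat \<Rightarrow> bool" where
  "mat_scalar d M \<longleftrightarrow> (\<forall>i<d. \<forall>j<d. cl_is_scalar (M i j))"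

definition is_inverse :: "nat \<Rightarrow> clmat \<Rightarrow> clmat \<Rightarrow> bool" where
  "is_inverse d P Q \<longleftrightarrow> meq d (mmul d P Q) (mdiag (cl_scalar 1)) \<and> meq d (mmul d Q P) (mdiag (cl_scalar 1))"

definition madd :: "clmat \<Rightarrow> clmat \<Rightarrow> clmat" where
  "madd M N = (\<lambda>i j. cl_add (M i j) (N i j))"
definition msub :: "clmat \<Rightarrow> clmat \<Rightarrow> clmat" where
  "msub M N = (\<lambda>i j. cl_sub (M i j) (N i j))"
definition msmul :: "complex \<Rightarrow> clmat \<Rightarrow> clmat" where
  "msmul c M = (\<lambda>i j. cl_smul c (M i j))"
definition mlmul :: "cl \<Rightarrow> clmat \<Rightarrow> clmat" where
  "mlmul x M = (\<lambda>i j. cl_mult x (M i j))"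
definition mrmul :: "clmat \<Rightarrow> cl \<Rightarrow> clmat" where
  "mrmul M x = (\<lambda>i j. cl_mult (M i j) x)"

definition blk :: "nat \<Rightarrow> clmat \<Rightarrow> clmat \<Rightarrow> clmat \<Rightarrow> clmat \<Rightarrow> clmat" where
  "blk d A B C D = (\<lambda>i j. if i < d then (if j < d then A i j else B i (j - d))
                              else (if j < d then C (i - d) j else D (i - d) (j - d)))"

text \<open>P_(n+2), with s a square root of r, P = P_n of size d.\<close>
definition Pnext :: "nat \<Rightarrow> complex \<Rightarrow> complex \<Rightarrow> nat \<Rightarrow> clmat \<Rightarrow> clmat" where
  "Pnext n r s d P = msmul (1/2) (blk d
     (mlmul (cl_add (cl_scalar 1) (cl_smul (1/s) (ebar (Suc n)))) P)
     (mlmul (cl_sub (E2 n) (cl_smul (1/s) (mu n))) P)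
     (mlmul (cl_smul (1/r) (cl_add (E2 n) (cl_smul (1/s) (mu n)))) P)
     (mlmul (cl_sub (cl_scalar 1) (cl_smul (1/s) (ebar (Suc n)))) P))"

text \<open>P'_(n+2), with Q = P_n^(-1).\<close>
definition Pnext' :: "nat \<Rightarrow> complex \<Rightarrow> complex \<Rightarrow> nat \<Rightarrow> clmat \<Rightarrow> clmat" where
  "Pnext' n r s d Q = msmul (1/2) (blk d
     (mrmul Q (cl_add (cl_scalar 1) (cl_smul (1/s) (ebar (Suc n)))))
     (mrmul Q (cl_sub (E2 n) (cl_smul (1/s) (mu n))))
     (mrmul Q (cl_smul (1/r) (cl_add (E2 n) (cl_smul (1/s) (mu n)))))
     (mrmul Q (cl_sub (cl_scalar 1) (cl_smul (1/s) (ebar (Suc n))))))"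

definition phi :: "nat \<Rightarrow> clmat \<Rightarrow> clmat \<Rightarrow> cl \<Rightarrow> clmat" where
  "phi d P Q a = mmul d (mmul d P (mdiag a)) Q"

end

theory Submission
  imports Defs
begin

abbreviation sd :: "'a set \<Rightarrow> 'a set \<Rightarrow> 'a set" where
  "sd A B \<equiv> (A - B) \<union> (B - A)"

definition inv_pairs :: "nat set \<Rightarrow> nat set \<Rightarrow> (nat \<times> nat) set" where
  "inv_pairs A B = {(i, j). i \<in> A \<and> j \<in> B \<and> j < i}"

lemma bsign_alt: "bsign A B = (-1) ^ card (inv_pairs A B) * (-1) ^ card (A \<inter> B)"
  unfolding bsign_def inv_pairs_def by (simp add: power_add)

lemma card_sd_parity:
  assumes "finite S" "finite T"
  shows "((-1::complex) ^ card (sd S T)) = (-1) ^ card S * (-1) ^ card T"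
proof -
  have cS: "card S = card (S - T) + card (S \<inter> T)"
    using assms by (metis Int_Diff_disjoint Un_Diff_Int card_Un_disjoint finite_Diff finite_Int inf_commute)
  have cT: "card T = card (T - S) + card (S \<inter> T)"
    using assms by (metis Int_Diff_disjoint Un_Diff_Int card_Un_disjoint finite_Diff finite_Int inf_commute)
  have cD: "card (sd S T) = card (S - T) + card (T - S)"
    using assms by (subst card_Un_disjoint) auto
  have "(-1::complex) ^ card S * (-1) ^ card T
      = (-1) ^ card (sd S T) * ((-1) ^ card (S \<inter> T) * (-1) ^ card (S \<inter> T))"
    unfolding cS cT cD by (simp add: power_add)
  also have "(-1::complex) ^ card (S \<inter> T) * (-1) ^ card (S \<inter> T) = 1"
    by (simp flip: power_add add: power_even_eq[symmetric] mult_2[symmetric])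
  finally show ?thesis by simp
qed

lemma finite_inv_pairs: "finite A \<Longrightarrow> finite B \<Longrightarrow> finite (inv_pairs A B)"
  by (rule finite_subset[of _ "A \<times> B"]) (auto simp: inv_pairs_def)

lemma bsign_sq: "bsign A B * bsign A B = 1"
  unfolding bsign_def by (simp flip: power_add add: power_even_eq[symmetric] mult_2[symmetric])

lemma bsign_nz: "bsign A B \<noteq> 0"
  using bsign_sq[of A B] by auto

lemma bsign_lin1:
  assumes "finite A" "finite B" "finite X"
  shows "bsign (sd A B) X = bsign A X * bsign B X"
proof -
  have 1: "inv_pairs (sd A B) X = sd (inv_pairs A X) (inv_pairs B X)"
    unfolding inv_pairs_def by auto
  have 2: "sd A B \<inter> X = sd (A \<inter> X) (B \<inter> X)" by auto
  show ?thesis unfolding bsign_alt 1 2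
    using assms by (simp add: card_sd_parity finite_inv_pairs)
qed

lemma bsign_lin2:
  assumes "finite A" "finite B" "finite X"
  shows "bsign A (sd B X) = bsign A B * bsign A X"
proof -
  have 1: "inv_pairs A (sd B X) = sd (inv_pairs A B) (inv_pairs A X)"
    unfolding inv_pairs_def by auto
  have 2: "A \<inter> sd B X = sd (A \<inter> B) (A \<inter> X)" by auto
  show ?thesis unfolding bsign_alt 1 2
    using assms by (simp add: card_sd_parity finite_inv_pairs)
qed

lemma bsign_cocycle:
  assumes "finite A" "finite B" "finite X"
  shows "bsign (sd A B) X * bsign A B = bsign A (sd B X) * bsign B X"
  using assms by (simp add: bsign_lin1 bsign_lin2)

lemma card_pairs_partition:
  assumes "finite A" "finite B"
  shows "card (inv_pairs A B) + card (inv_pairs B A) + card (A \<inter> B) = card A * card B"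
proof -
  let ?L = "inv_pairs A B" and ?G = "{(i, j). i \<in> A \<and> j \<in> B \<and> i < j}"
    and ?D = "{(i, j). i \<in> A \<and> j \<in> B \<and> i = j}"
  have fin: "finite (A \<times> B)" using assms by simp
  have AB: "A \<times> B = ?L \<union> ?G \<union> ?D" unfolding inv_pairs_def by auto
  have cG: "card ?G = card (inv_pairs B A)"
  proof -
    have "?G = prod.swap ` inv_pairs B A" unfolding inv_pairs_def by auto
    thus ?thesis by (simp add: card_image)
  qed
  have cD: "card ?D = card (A \<inter> B)"
  proof -
    have "?D = (\<lambda>i. (i, i)) ` (A \<inter> B)" by auto
    thus ?thesis by (simp add: card_image inj_on_def)
  qed
  have fL: "finite ?L" by (rule finite_subset[OF _ fin]) (auto simp: inv_pairs_def)
  have fG: "finite ?G" by (rule finite_subset[OF _ fin]) auto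
  have fD: "finite ?D" by (rule finite_subset[OF _ fin]) auto
  have d1: "?L \<inter> ?G = {}" by (auto simp: inv_pairs_def)
  have d2: "(?L \<union> ?G) \<inter> ?D = {}" by (auto simp: inv_pairs_def)
  have "card (A \<times> B) = card (?L \<union> ?G) + card ?D"
    unfolding AB using fL fG fD d2 by (simp add: card_Un_disjoint)
  also have "card (?L \<union> ?G) = card ?L + card ?G" using fL fG d1 by (simp add: card_Un_disjoint)
  finally have "card (A \<times> B) = card ?L + card ?G + card ?D" .
  thus ?thesis using cG cD by (simp add: card_cartesian_product)
qed

lemma bsign_swap:
  assumes "finite A" "finite B"
  shows "bsign A B * bsign B A = (-1) ^ (card A * card B + card (A \<inter> B))"
proof -
  have "bsign A B * bsign B A = (-1) ^ (card (inv_pairs A B) + card (inv_pairs B A) + card (A \<inter> B) + card (A \<inter> B))"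
    unfolding bsign_alt by (simp add: power_add Int_commute)
  thus ?thesis using card_pairs_partition[OF assms] by simp
qed

lemma bsign_self:
  assumes "finite S"
  shows "bsign S S = (-1) ^ (card S * (card S + 1) div 2)"
proof -
  have p: "2 * card (inv_pairs S S) + card S = card S * card S"
    using card_pairs_partition[OF assms assms] by simp
  have "card (inv_pairs S S) + card S = card S * (card S + 1) div 2"
  proof -
    have "2 * (card (inv_pairs S S) + card S) = card S * (card S + 1)" using p by (simp add: algebra_simps)
    thus ?thesis by simp
  qed
  thus ?thesis unfolding bsign_def inv_pairs_def by simp
qed

definition in_K :: "nat set \<Rightarrow> cl \<Rightarrow> bool" where
  "in_K K a \<longleftrightarrow> (\<forall>A. a A \<noteq> 0 \<longrightarrow> A \<subseteq> K)"

lemma in_C_K: "in_C m a = in_K {1..m} a"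
  unfolding in_C_def in_K_def by simp

lemma sd_eq_iff: "(sd A B = C) = (B = sd A C)" by blast

lemma sd_sd: "sd A (sd A C) = C" by blast

lemma X1: assumes fb: "finite S" shows "(\<Sum>B\<in>S. if sd A B = C then f B else 0)
      = (if sd A C \<in> S then f (sd A C) else 0)"
proof -
    have "(\<Sum>B\<in>S. if sd A B = C then f B else 0)
        = (\<Sum>B\<in>S. if B = sd A C then f B else 0)"
      by (rule sum.cong[OF refl]) (simp only: sd_eq_iff)
    also have "\<dots> = (if sd A C \<in> S then f (sd A C) else 0)"
      using fb by (simp add: sum.delta)
    finally show ?thesis .
qed
lemma MF:
  assumes K: "finite K" and a: "in_K K a" and b: "in_K K b"
  shows "cl_mult a b C = (\<Sum>A\<in>Pow K. bsign A (sd A C) * a A * b (sd A C))"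
proof -
  have fb: "finite {B. b B \<noteq> 0}" using b K unfolding in_K_def
    by (intro finite_subset[OF _ finite_Pow_iff[THEN iffD2, OF K]]) auto
  have inner: "(\<Sum>B\<in>{B. b B \<noteq> 0}. if sd A B = C then bsign A B * a A * b B else 0)
      = bsign A (sd A C) * a A * b (sd A C)" for A
    by (subst X1[OF fb]) auto
  have "cl_mult a b C = (\<Sum>A\<in>{A. a A \<noteq> 0}. bsign A (sd A C) * a A * b (sd A C))"
    unfolding cl_mult_def by (rule sum.cong[OF refl inner])
  also have "\<dots> = (\<Sum>A\<in>Pow K. bsign A (sd A C) * a A * b (sd A C))"
    using a K unfolding in_K_def by (intro sum.mono_neutral_left) auto
  finally show ?thesis .
qed

lemma in_K_mult:
  assumes K: "finite K" and a: "in_K K a" and b: "in_K K b"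
  shows "in_K K (cl_mult a b)"
  unfolding in_K_def
proof (intro allI impI)
  fix C assume nz: "cl_mult a b C \<noteq> 0"
  show "C \<subseteq> K"
  proof (rule ccontr)
    assume "\<not> C \<subseteq> K"
    hence "\<forall>A\<in>Pow K. b (sd A C) = 0" using b unfolding in_K_def by blast
    hence "cl_mult a b C = 0" by (simp add: MF[OF K a b])
    thus False using nz by simp
  qed
qed

lemma in_K_mono: "in_K K a \<Longrightarrow> K \<subseteq> L \<Longrightarrow> in_K L a"
  unfolding in_K_def by blast

definition fin_cl :: "cl \<Rightarrow> bool" where
  "fin_cl a \<longleftrightarrow> (\<exists>K. finite K \<and> in_K K a)"

lemma fin_cl_common:
  assumes "fin_cl a" "fin_cl b" "fin_cl c"
  obtains K where "finite K" "in_K K a" "in_K K b" "in_K K c"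
proof -
  obtain K1 K2 K3 where "finite K1" "in_K K1 a" "finite K2" "in_K K2 b" "finite K3" "in_K K3 c"
    using assms unfolding fin_cl_def by blast
  moreover have "in_K (K1 \<union> K2 \<union> K3) a" by (rule in_K_mono[OF \<open>in_K K1 a\<close>]) auto
  moreover have "in_K (K1 \<union> K2 \<union> K3) b" by (rule in_K_mono[OF \<open>in_K K2 b\<close>]) auto
  moreover have "in_K (K1 \<union> K2 \<union> K3) c" by (rule in_K_mono[OF \<open>in_K K3 c\<close>]) auto
  ultimately show ?thesis using that[of "K1 \<union> K2 \<union> K3"] by blast
qed

lemma cl_mult_assoc:
  assumes "fin_cl a" "fin_cl b" "fin_cl c"
  shows "cl_mult (cl_mult a b) c = cl_mult a (cl_mult b c)"
proof
  fix C
  obtain K where K: "finite K" and a: "in_K K a" and b: "in_K K b" and c: "in_K K c"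
    using fin_cl_common[OF assms] .
  have ab: "in_K K (cl_mult a b)" and bc: "in_K K (cl_mult b c)" using in_K_mult K a b c by auto
  have fK: "A \<in> Pow K \<Longrightarrow> finite A" for A using K finite_subset by auto
  have "cl_mult (cl_mult a b) c C
      = (\<Sum>D\<in>Pow K. \<Sum>A\<in>Pow K. bsign D (sd D C) * (bsign A (sd A D) * a A * b (sd A D)) * c (sd D C))"
    unfolding MF[OF K ab c] MF[OF K a b] by (simp add: sum_distrib_left sum_distrib_right)
  also have "\<dots> = (\<Sum>A\<in>Pow K. \<Sum>D\<in>Pow K. bsign D (sd D C) * (bsign A (sd A D) * a A * b (sd A D)) * c (sd D C))"
    by (rule sum.swap)
  also have "\<dots> = (\<Sum>A\<in>Pow K. \<Sum>B\<in>Pow K. bsign (sd A B) (sd (sd A B) C) * (bsign A B * a A * b B) * c (sd (sd A B) C))"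
  proof (rule sum.cong[OF refl])
    fix A assume A: "A \<in> Pow K"
    have bij: "bij_betw (sd A) (Pow K) (Pow K)"
      by (rule bij_betw_byWitness[where f' = "sd A"]) (use A in auto)
    show "(\<Sum>D\<in>Pow K. bsign D (sd D C) * (bsign A (sd A D) * a A * b (sd A D)) * c (sd D C))
        = (\<Sum>B\<in>Pow K. bsign (sd A B) (sd (sd A B) C) * (bsign A B * a A * b B) * c (sd (sd A B) C))"
      using sum.reindex_bij_betw[OF bij, of "\<lambda>D. bsign D (sd D C) * (bsign A (sd A D) * a A * b (sd A D)) * c (sd D C)"]
      by (simp add: sd_sd)
  qed
  also have "\<dots> = (\<Sum>A\<in>Pow K. \<Sum>B\<in>Pow K. bsign A (sd A C) * a A * (bsign B (sd B (sd A C)) * b B * c (sd B (sd A C))))"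
  proof (intro sum.cong refl)
    fix A B assume A: "A \<in> Pow K" and B: "B \<in> Pow K"
    let ?X = "sd (sd A B) C"
    have e1: "sd B (sd A C) = ?X" by blast
    have e2: "sd A C = sd B ?X" by blast
    show "bsign (sd A B) ?X * (bsign A B * a A * b B) * c ?X
        = bsign A (sd A C) * a A * (bsign B (sd B (sd A C)) * b B * c (sd B (sd A C)))"
    proof (cases "c ?X = 0")
      case True thus ?thesis by (simp add: e1)
    next
      case False
      hence "?X \<subseteq> K" using c unfolding in_K_def by blast
      hence fX: "finite ?X" using K finite_subset by auto
      have H0: "bsign (sd A B) ?X * bsign A B = bsign A (sd B ?X) * bsign B ?X"
        by (rule bsign_cocycle) (use fK A B fX in auto)
      show ?thesis
      proof -
        have H: "bsign (sd A B) ?X * bsign A B = bsign A (sd A C) * bsign B ?X"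
          using H0 unfolding e2 .
        have "bsign (sd A B) ?X * (bsign A B * a A * b B) * c ?X
            = (bsign (sd A B) ?X * bsign A B) * (a A * b B * c ?X)" by (simp add: mult_ac)
        also have "\<dots> = (bsign A (sd A C) * bsign B ?X) * (a A * b B * c ?X)" by (simp only: H)
        also have "\<dots> = bsign A (sd A C) * a A * (bsign B ?X * b B * c ?X)" by (simp add: mult_ac)
        finally show ?thesis unfolding e1 .
      qed
    qed
  qed
  also have "\<dots> = cl_mult a (cl_mult b c) C"
    unfolding MF[OF K a bc] MF[OF K b c] by (simp add: sum_distrib_left sum_distrib_right)
  finally show "cl_mult (cl_mult a b) c C = cl_mult a (cl_mult b c) C" .
qed

lemma in_K_add: "in_K K a \<Longrightarrow> in_K K b \<Longrightarrow> in_K K (cl_add a b)"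
  unfolding in_K_def cl_add_def by (metis add.right_neutral add_0)
lemma in_K_sub: "in_K K a \<Longrightarrow> in_K K b \<Longrightarrow> in_K K (cl_sub a b)"
  unfolding in_K_def cl_sub_def by (metis diff_self diff_zero eq_iff_diff_eq_0)
lemma in_K_smul: "in_K K a \<Longrightarrow> in_K K (cl_smul c a)"
  unfolding in_K_def cl_smul_def by auto
lemma in_K_scalar: "in_K K (cl_scalar c)"
  unfolding in_K_def cl_scalar_def by auto
lemma in_K_zero: "in_K K (\<lambda>_. 0)"
  unfolding in_K_def by auto
lemma in_K_neg: "in_K K a \<Longrightarrow> in_K K (\<lambda>A. - a A)"
  unfolding in_K_def by auto

lemma fin_cl_I: "finite K \<Longrightarrow> in_K K a \<Longrightarrow> fin_cl a"
  unfolding fin_cl_def by blast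

lemma fin_cl_mult: "fin_cl a \<Longrightarrow> fin_cl b \<Longrightarrow> fin_cl (cl_mult a b)"
  by (metis fin_cl_I fin_cl_common in_K_mult)
lemma fin_cl_add: "fin_cl a \<Longrightarrow> fin_cl b \<Longrightarrow> fin_cl (cl_add a b)"
  by (metis fin_cl_I fin_cl_common in_K_add)
lemma fin_cl_sub: "fin_cl a \<Longrightarrow> fin_cl b \<Longrightarrow> fin_cl (cl_sub a b)"
  by (metis fin_cl_I fin_cl_common in_K_sub)
lemma fin_cl_smul: "fin_cl a \<Longrightarrow> fin_cl (cl_smul c a)"
  by (metis fin_cl_def in_K_smul)
lemma fin_cl_neg: "fin_cl a \<Longrightarrow> fin_cl (\<lambda>A. - a A)"
  by (metis fin_cl_def in_K_neg)
lemma fin_cl_scalar: "fin_cl (cl_scalar c)"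
  using fin_cl_I[OF finite.emptyI in_K_scalar] .
lemma fin_cl_zero: "fin_cl (\<lambda>_. 0)"
  using fin_cl_I[OF finite.emptyI in_K_zero] .
lemma fin_cl_in_C: "in_C m a \<Longrightarrow> fin_cl a"
  unfolding in_C_K by (rule fin_cl_I[rotated]) auto

lemma cl_distrib_left:
  assumes "fin_cl a" "fin_cl b" "fin_cl c"
  shows "cl_mult a (cl_add b c) = cl_add (cl_mult a b) (cl_mult a c)"
proof
  fix C
  obtain K where K: "finite K" and a: "in_K K a" and b: "in_K K b" and c: "in_K K c"
    using fin_cl_common[OF assms] .
  show "cl_mult a (cl_add b c) C = cl_add (cl_mult a b) (cl_mult a c) C"
    unfolding MF[OF K a in_K_add[OF b c]] cl_add_def[of "cl_mult a b"] MF[OF K a b] MF[OF K a c]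
    by (simp add: cl_add_def sum.distrib algebra_simps)
qed

lemma cl_distrib_right:
  assumes "fin_cl a" "fin_cl b" "fin_cl c"
  shows "cl_mult (cl_add a b) c = cl_add (cl_mult a c) (cl_mult b c)"
proof
  fix C
  obtain K where K: "finite K" and a: "in_K K a" and b: "in_K K b" and c: "in_K K c"
    using fin_cl_common[OF assms] .
  show "cl_mult (cl_add a b) c C = cl_add (cl_mult a c) (cl_mult b c) C"
    unfolding MF[OF K in_K_add[OF a b] c] cl_add_def[of "cl_mult a c"] MF[OF K a c] MF[OF K b c]
    by (simp add: cl_add_def sum.distrib algebra_simps)
qed

lemma bsign_empty1: "bsign {} B = 1"
  unfolding bsign_def by simp
lemma bsign_empty2: "bsign A {} = 1"
  unfolding bsign_def by simp

lemma cl_scalar_mult: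
  assumes "fin_cl a"
  shows "cl_mult (cl_scalar c) a = cl_smul c a"
proof
  fix C
  obtain K where K: "finite K" and a: "in_K K a"
    using assms unfolding fin_cl_def by blast
  have "cl_mult (cl_scalar c) a C = (\<Sum>A\<in>Pow K. if A = {} then bsign A (sd A C) * c * a (sd A C) else 0)"
    unfolding MF[OF K in_K_scalar a] by (rule sum.cong) (auto simp: cl_scalar_def)
  also have "\<dots> = c * a C" using K by (simp add: sum.delta bsign_empty1)
  finally show "cl_mult (cl_scalar c) a C = cl_smul c a C" by (simp add: cl_smul_def)
qed

lemma cl_mult_scalar:
  assumes "fin_cl a"
  shows "cl_mult a (cl_scalar c) = cl_smul c a"
proof
  fix C
  obtain K where K: "finite K" and a: "in_K K a"
    using assms unfolding fin_cl_def by blast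
  have "cl_mult a (cl_scalar c) C = (\<Sum>A\<in>Pow K. if A = C then bsign A (sd A C) * a A * c else 0)"
    unfolding MF[OF K a in_K_scalar] by (rule sum.cong) (auto simp: cl_scalar_def)
  also have "\<dots> = c * a C" using K a by (auto simp: sum.delta bsign_empty2 in_K_def)
  finally show "cl_mult a (cl_scalar c) C = cl_smul c a C" by (simp add: cl_smul_def)
qed

lemma cl_smul_1: "cl_smul 1 a = a" by (simp add: cl_smul_def)

typedef clf = "{a::cl. fin_cl a}" morphisms rep abs
  by (rule exI[of _ "\<lambda>_. 0"]) (simp add: fin_cl_zero)

setup_lifting type_definition_clf

instantiation clf :: ring_1
begin
lift_definition zero_clf :: clf is "\<lambda>_. 0" by (simp add: fin_cl_zero)
lift_definition one_clf :: clf is "cl_scalar 1" by (simp add: fin_cl_scalar)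
lift_definition plus_clf :: "clf \<Rightarrow> clf \<Rightarrow> clf" is cl_add by (simp add: fin_cl_add)
lift_definition minus_clf :: "clf \<Rightarrow> clf \<Rightarrow> clf" is cl_sub by (simp add: fin_cl_sub)
lift_definition uminus_clf :: "clf \<Rightarrow> clf" is "\<lambda>a A. - a A" by (simp add: fin_cl_neg)
lift_definition times_clf :: "clf \<Rightarrow> clf \<Rightarrow> clf" is cl_mult by (simp add: fin_cl_mult)
instance
proof
  fix a b c :: clf
  show "a * b * c = a * (b * c)" by transfer (simp add: cl_mult_assoc)
  show "1 * a = a" by transfer (simp add: cl_scalar_mult cl_smul_1)
  show "a * 1 = a" by transfer (simp add: cl_mult_scalar cl_smul_1)
  show "(a + b) * c = a * c + b * c" by transfer (simp add: cl_distrib_right)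
  show "a * (b + c) = a * b + a * c" by transfer (simp add: cl_distrib_left)
  show "a + b + c = a + (b + c)" by transfer (simp add: cl_add_def add.assoc)
  show "a + b = b + a" by transfer (simp add: cl_add_def add.commute)
  show "0 + a = a" by transfer (simp add: cl_add_def)
  show "- a + a = 0" by transfer (simp add: cl_add_def)
  show "a - b = a + - b" by transfer (simp add: cl_add_def cl_sub_def)
  show "(0::clf) \<noteq> 1" by transfer (simp add: cl_scalar_def fun_eq_iff)
qed
end

lift_definition sc :: "complex \<Rightarrow> clf" is cl_scalar by (simp add: fin_cl_scalar)

lemma sc_central: "sc c * x = x * sc c"
  by transfer (simp add: cl_scalar_mult cl_mult_scalar)

lemma sc_mult: "sc c * sc d = sc (c * d)"
  by transfer (simp add: cl_scalar_mult fin_cl_scalar, simp add: cl_smul_def cl_scalar_def fun_eq_iff)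

lemma sc_add: "sc (c + d) = sc c + sc d"
  by transfer (simp add: cl_add_def cl_scalar_def fun_eq_iff)

lemma sc_diff: "sc (c - d) = sc c - sc d"
  by transfer (simp add: cl_sub_def cl_scalar_def fun_eq_iff)

lemma sc_neg: "sc (- c) = - sc c"
  by transfer (simp add: cl_scalar_def fun_eq_iff)

lemma sc_0: "sc 0 = 0"
  by transfer (simp add: cl_scalar_def fun_eq_iff)

lemma sc_1: "sc 1 = 1"
  by transfer simp

lemma rep_sc_mult: "rep (sc c * x) = cl_smul c (rep x)"
  by transfer (simp add: cl_scalar_mult)

lemma rep_sc: "rep (sc c) = cl_scalar c"
  by transfer simp

lemma rep_add: "rep (x + y) = cl_add (rep x) (rep y)"
  by transfer simp

lemma rep_diff: "rep (x - y) = cl_sub (rep x) (rep y)"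
  by transfer simp

lemma rep_mult: "rep (x * y) = cl_mult (rep x) (rep y)"
  by transfer simp

lemma rep_zero: "rep 0 = cl_scalar 0"
  by transfer (simp add: cl_scalar_def fun_eq_iff)

lemma rep_sum: "finite S \<Longrightarrow> rep (sum f S) = (\<lambda>A. \<Sum>x\<in>S. rep (f x) A)"
proof (induction S rule: finite_induct)
  case empty thus ?case by (simp add: rep_zero cl_scalar_def fun_eq_iff)
next
  case (insert x F) thus ?case by (simp add: rep_add cl_add_def)
qed

lemma rep_abs: "fin_cl a \<Longrightarrow> rep (abs a) = a"
  by (simp add: abs_inverse)

lemma sc_mult_left: "x * (sc c * y) = sc c * (x * y)"
  by (metis mult.assoc sc_central)

lemma sc_mult_sc: "sc c * (sc d * y) = sc (c * d) * y"
  by (metis mult.assoc sc_mult)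

definition blade :: "nat set \<Rightarrow> cl" where
  "blade S = (\<lambda>A. if A = S then 1 else 0)"

lemma in_K_blade: "S \<subseteq> K \<Longrightarrow> in_K K (blade S)"
  unfolding in_K_def blade_def by auto

lemma fin_cl_blade: "finite S \<Longrightarrow> fin_cl (blade S)"
  using fin_cl_I in_K_blade by blast

lemma mult_blade_right:
  assumes K: "finite K" and y: "in_K K y" and S: "S \<subseteq> K"
  shows "cl_mult y (cl_smul c (blade S)) C = c * bsign (sd C S) S * y (sd C S)"
proof -
  have "cl_mult y (cl_smul c (blade S)) C
      = (\<Sum>A\<in>Pow K. if A = sd C S then bsign A (sd A C) * y A * c else 0)"
    unfolding MF[OF K y in_K_smul[OF in_K_blade[OF S]]]
    by (rule sum.cong[OF refl]) (auto simp: cl_smul_def blade_def)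
  also have "\<dots> = (if sd C S \<in> Pow K then bsign (sd C S) S * y (sd C S) * c else 0)"
  proof -
    have "sd (sd C S) C = S" by blast
    thus ?thesis using K by (simp add: sum.delta)
  qed
  also have "\<dots> = c * bsign (sd C S) S * y (sd C S)"
    using y unfolding in_K_def by auto
  finally show ?thesis .
qed

lemma mult_blade_left:
  assumes K: "finite K" and y: "in_K K y" and S: "S \<subseteq> K"
  shows "cl_mult (blade S) y C = bsign S (sd S C) * y (sd S C)"
proof -
  have "cl_mult (blade S) y C
      = (\<Sum>A\<in>Pow K. if A = S then bsign A (sd A C) * y (sd A C) else 0)"
    unfolding MF[OF K in_K_blade[OF S] y]
    by (rule sum.cong[OF refl]) (auto simp: blade_def)
  also have "\<dots> = bsign S (sd S C) * y (sd S C)"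
    using K S by (simp add: sum.delta)
  finally show ?thesis .
qed

lemma blade_mult:
  assumes "finite A" "finite B"
  shows "cl_mult (blade A) (blade B) = cl_smul (bsign A B) (blade (sd A B))"
proof
  fix C
  have K: "finite (A \<union> B)" using assms by simp
  have "cl_mult (blade A) (blade B) C = bsign A (sd A C) * blade B (sd A C)"
    by (rule mult_blade_left[OF K in_K_blade]) auto
  also have "\<dots> = cl_smul (bsign A B) (blade (sd A B)) C"
  proof -
    have "(sd A C = B) = (C = sd A B)" by blast
    thus ?thesis unfolding blade_def cl_smul_def by auto
  qed
  finally show "cl_mult (blade A) (blade B) C = cl_smul (bsign A B) (blade (sd A B)) C" .
qed

lemma ebar_blade: "ebar k = blade {1..k}"
proof (induction k)
  case 0 thus ?case by (simp add: blade_def cl_scalar_def fun_eq_iff)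
next
  case (Suc k)
  have g: "cl_gen (Suc k) = blade {Suc k}" by (simp add: cl_gen_def blade_def fun_eq_iff)
  have s: "bsign {1..k} {Suc k} = 1"
  proof -
    have e1: "{(i, j). i \<in> {1..k} \<and> j \<in> {Suc k} \<and> j < i} = {}" by auto
    have e2: "{1..k} \<inter> {Suc k} = {}" by auto
    show ?thesis unfolding bsign_def by (subst e1, subst e2) simp
  qed
  have d: "sd {1..k} {Suc k} = {1..Suc k}" by auto
  have bm: "cl_mult (blade {1..k}) (blade {Suc k}) = cl_smul (bsign {1..k} {Suc k}) (blade (sd {1..k} {Suc k}))"
    by (rule blade_mult) auto
  show ?case unfolding ebar.simps Suc g bm s d cl_smul_1 ..
qed

lemma cl_smul_blade_1: "cl_smul 1 x = x" by (simp add: cl_smul_def)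

lemma scalar_blade: "cl_scalar c = cl_smul c (blade {})"
  by (simp add: cl_scalar_def cl_smul_def blade_def fun_eq_iff)

definition hq :: "clf \<Rightarrow> clf \<Rightarrow> complex \<Rightarrow> complex \<Rightarrow> complex \<Rightarrow> complex \<Rightarrow> clf" where
  "hq e1 e2 c0 c1 c2 c3 = sc c0 + sc c1 * e1 + sc c2 * e2 + sc c3 * (e1 * e2)"

lemma hq_add: "hq e1 e2 a0 a1 a2 a3 + hq e1 e2 b0 b1 b2 b3 = hq e1 e2 (a0+b0) (a1+b1) (a2+b2) (a3+b3)"
  unfolding hq_def sc_add distrib_right by (simp only: add_ac)

lemma hq_smul: "sc c * hq e1 e2 a0 a1 a2 a3 = hq e1 e2 (c*a0) (c*a1) (c*a2) (c*a3)"
  unfolding hq_def distrib_left sc_mult_sc sc_mult ..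

lemma hq_e1:
  assumes R1: "e1 * e1 = sc r" and R3: "e2 * e1 = - (e1 * e2)"
  shows "hq e1 e2 a0 a1 a2 a3 * e1 = hq e1 e2 (a1*r) a0 (-a3*r) (-a2)"
proof -
  have A: "(sc a3 * (e1 * e2)) * e1 = - (sc (a3 * r) * e2)"
  proof -
    have "(sc a3 * (e1 * e2)) * e1 = - (sc a3 * ((e1 * e1) * e2))"
      by (simp add: mult.assoc R3)
    thus ?thesis by (simp add: R1 sc_mult_sc)
  qed
  have B: "(sc a2 * e2) * e1 = - (sc a2 * (e1 * e2))" by (simp add: mult.assoc R3)
  have C: "(sc a1 * e1) * e1 = sc (a1 * r)" by (simp add: mult.assoc R1 sc_mult)
  show ?thesis unfolding hq_def distrib_right A B C
    by (simp add: sc_neg sc_mult algebra_simps)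
qed

lemma hq_e2:
  assumes R2: "e2 * e2 = sc r"
  shows "hq e1 e2 a0 a1 a2 a3 * e2 = hq e1 e2 (a2*r) (a3*r) a0 a1"
proof -
  have A: "(sc a3 * (e1 * e2)) * e2 = sc (a3 * r) * e1"
  proof -
    have "(sc a3 * (e1 * e2)) * e2 = sc a3 * (e1 * sc r)"
      by (simp add: mult.assoc R2)
    also have "\<dots> = sc (a3 * r) * e1" by (simp add: sc_central[symmetric] sc_mult_sc)
    finally show ?thesis .
  qed
  have C: "(sc a2 * e2) * e2 = sc (a2 * r)" by (simp add: mult.assoc R2 sc_mult)
  have B: "(sc a1 * e1) * e2 = sc a1 * (e1 * e2)" by (simp add: mult.assoc)
  show ?thesis unfolding hq_def distrib_right A B C
    by (simp add: algebra_simps)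
qed

lemma hq_mult:
  assumes R1: "e1 * e1 = sc r" and R2: "e2 * e2 = sc r" and R3: "e2 * e1 = - (e1 * e2)"
  shows "hq e1 e2 u0 u1 u2 u3 * hq e1 e2 v0 v1 v2 v3 =
    hq e1 e2 (u0*v0 + r*u1*v1 + r*u2*v2 - r*r*u3*v3) (u0*v1 + u1*v0 - r*u2*v3 + r*u3*v2)
             (u0*v2 + u2*v0 + r*u1*v3 - r*u3*v1) (u0*v3 + u3*v0 + u1*v2 - u2*v1)"
proof -
  let ?u = "hq e1 e2 u0 u1 u2 u3"
  have "?u * hq e1 e2 v0 v1 v2 v3 = ?u * sc v0 + ?u * (sc v1 * e1) + ?u * (sc v2 * e2) + ?u * (sc v3 * (e1 * e2))"
    unfolding hq_def[of e1 e2 v0] distrib_left ..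
  also have "\<dots> = sc v0 * ?u + sc v1 * (?u * e1) + sc v2 * (?u * e2) + sc v3 * ((?u * e1) * e2)"
    by (simp only: sc_central[symmetric] sc_mult_left mult.assoc)
  also have "\<dots> = hq e1 e2 (v0*u0 + v1*(u1*r) + v2*(u2*r) + v3*(-u3*r*r))
                         (v0*u1 + v1*u0 + v2*(u3*r) + v3*(-u2*r))
                         (v0*u2 + v1*(-u3*r) + v2*u0 + v3*(u1*r))
                         (v0*u3 + v1*(-u2) + v2*u1 + v3*u0)"
    by (simp only: hq_e1[OF R1 R3] hq_e2[OF R2] hq_smul hq_add)
  also have "\<dots> = hq e1 e2 (u0*v0 + r*u1*v1 + r*u2*v2 - r*r*u3*v3) (u0*v1 + u1*v0 - r*u2*v3 + r*u3*v2)
             (u0*v2 + u2*v0 + r*u1*v3 - r*u3*v1) (u0*v3 + u3*v0 + u1*v2 - u2*v1)"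
    by (simp add: algebra_simps)
  finally show ?thesis .
qed

lemma hq_cong: "a = a' \<Longrightarrow> b = b' \<Longrightarrow> c = c' \<Longrightarrow> d = d' \<Longrightarrow> hq e1 e2 a b c d = hq e1 e2 a' b' c' d'"
  by simp

lemma hq_scalar: "hq e1 e2 c 0 0 0 = sc c"
  by (simp add: hq_def sc_0)

definition Xm :: "clf \<Rightarrow> clf \<Rightarrow> complex \<Rightarrow> complex \<Rightarrow> bool \<Rightarrow> bool \<Rightarrow> clf" where
  "Xm e1 e2 r s p q = (if \<not> p \<and> \<not> q then hq e1 e2 1 (1/s) 0 0
     else if \<not> p \<and> q then hq e1 e2 0 0 1 (- (1/s))
     else if p \<and> \<not> q then hq e1 e2 0 0 (1/r) (1/r * (1/s))
     else hq e1 e2 1 (- (1/s)) 0 0)"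

definition expv :: "complex \<Rightarrow> complex \<Rightarrow> bool \<Rightarrow> bool \<Rightarrow> complex \<Rightarrow> complex \<Rightarrow> complex \<Rightarrow> complex \<Rightarrow> complex" where
  "expv r s p q g0 g1 g2 g3 = (if \<not> p \<and> \<not> q then g0 + s * g1
     else if \<not> p \<and> q then r * (g2 + s * g3)
     else if p \<and> \<not> q then g2 - s * g3
     else g0 - s * g1)"

lemma block_id:
  assumes R1: "e1 * e1 = sc r" and R2: "e2 * e2 = sc r" and R3: "e2 * e1 = - (e1 * e2)"
    and rs: "r = s * s" and s0: "s \<noteq> 0"
  shows "sc (1/4) * (Xm e1 e2 r s p False * hq e1 e2 g0 g1 g2 g3 * Xm e1 e2 r s False q
                   + Xm e1 e2 r s p True * hq e1 e2 g0 g1 g2 g3 * Xm e1 e2 r s True q)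
         = sc (expv r s p q g0 g1 g2 g3)"
proof -
  note M = hq_mult[OF R1 R2 R3]
  have r0: "r \<noteq> 0" using rs s0 by simp
  show ?thesis
    unfolding hq_scalar[of e1 e2, symmetric]
    by (cases p; cases q; simp only: Xm_def expv_def if_True if_False simp_thms M hq_add hq_smul;
        rule hq_cong; use s0 r0 in \<open>simp add: rs field_simps\<close>; algebra)
qed

lemma prod1_eq: "(x::complex) * y = 1 \<Longrightarrow> x * x = 1 \<Longrightarrow> y = x"
  by (metis mult.assoc mult.left_neutral mult.right_neutral)

lemma prodm1_eq: "(x::complex) * y = -1 \<Longrightarrow> x * x = 1 \<Longrightarrow> y = - x"
  by (metis mult.assoc mult.left_neutral mult_minus_right mult.right_neutral)

abbreviation S1 :: "nat \<Rightarrow> nat set" where "S1 n \<equiv> {1..Suc n}"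
abbreviation S2 :: "nat \<Rightarrow> nat set" where "S2 n \<equiv> insert (n+2) {1..n}"

lemma card_S1: "card (S1 n) = n + 1" by simp
lemma card_S2: "card (S2 n) = n + 1" by simp

lemma E1_blade: "E1 n = blade (S1 n)"
proof -
  have "E1 n = ebar (Suc n)" by (simp add: E1_def)
  also have "\<dots> = blade {1..Suc n}" by (rule ebar_blade)
  finally show ?thesis .
qed

lemma E2_blade: "E2 n = blade (S2 n)"
proof -
  have g: "cl_gen (n + 2) = blade {n + 2}" by (simp add: cl_gen_def blade_def fun_eq_iff)
  have s: "bsign {1..n} {n + 2} = 1"
  proof -
    have e1: "{(i, j). i \<in> {1..n} \<and> j \<in> {n + 2} \<and> j < i} = {}" by auto
    have e2: "{1..n} \<inter> {n + 2} = {}" by auto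
    show ?thesis unfolding bsign_def by (subst e1, subst e2) simp
  qed
  have d: "sd {1..n} {n + 2} = S2 n" by auto
  have bm: "cl_mult (blade {1..n}) (blade {n + 2}) = cl_smul (bsign {1..n} {n + 2}) (blade (sd {1..n} {n + 2}))"
    by (rule blade_mult) auto
  show ?thesis unfolding E2_def ebar_blade g bm s d cl_smul_1 ..
qed

lemma bsign_commute_Cn:
  assumes "even n" "T \<subseteq> {1..n}" "S = S1 n \<or> S = S2 n"
  shows "bsign S T = bsign T S"
proof -
  have fT: "finite T" using assms(2) finite_subset by blast
  have fS: "finite S" using assms(3) by auto
  have TS: "T \<inter> S = T" using assms(2,3) by auto
  have cS: "card S = n + 1" using assms(3) by auto
  have "bsign T S * bsign S T = (-1) ^ (card T * (n + 2))"
    using bsign_swap[OF fT fS] TS cS by (simp add: algebra_simps)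
  also have "\<dots> = 1" using assms(1) by (simp add: mult.commute power_mult)
  finally show ?thesis using prod1_eq bsign_sq by metis
qed

lemma commute_Cn:
  assumes n: "even n" and y: "in_C n y" and S: "S = S1 n \<or> S = S2 n"
  shows "cl_mult y (blade S) = cl_mult (blade S) y"
proof
  fix C
  have K: "finite {1..n+2}" by simp
  have yK: "in_K {1..n+2} y" using y unfolding in_C_K by (rule in_K_mono) auto
  have SK: "S \<subseteq> {1..n+2}" using S by auto
  have "cl_mult y (blade S) C = cl_mult y (cl_smul 1 (blade S)) C" by (simp add: cl_smul_1)
  also have "\<dots> = bsign (sd C S) S * y (sd C S)"
    using mult_blade_right[OF K yK SK] by simp
  also have "\<dots> = bsign S (sd S C) * y (sd S C)"
  proof (cases "y (sd C S) = 0")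
    case True thus ?thesis by (simp add: Un_commute)
  next
    case False
    hence "sd C S \<subseteq> {1..n}" using y unfolding in_C_def by blast
    hence "bsign S (sd C S) = bsign (sd C S) S" using bsign_commute_Cn[OF n _ S] by blast
    thus ?thesis by (simp add: Un_commute)
  qed
  also have "\<dots> = cl_mult (blade S) y C"
    using mult_blade_left[OF K yK SK] by simp
  finally show "cl_mult y (blade S) C = cl_mult (blade S) y C" .
qed

lemma E_sq:
  assumes "S = S1 n \<or> S = S2 n"
  shows "cl_mult (blade S) (blade S) = cl_scalar ((-1) ^ ((n + 1) * (n + 2) div 2))"
proof -
  have fS: "finite S" using assms by auto
  have cS: "card S = n + 1" using assms by auto
  have "cl_mult (blade S) (blade S) = cl_smul (bsign S S) (blade {})"
    using blade_mult[OF fS fS] by simp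
  also have "bsign S S = (-1) ^ ((n + 1) * (n + 2) div 2)"
    using bsign_self[OF fS] cS by simp
  finally show ?thesis by (simp add: scalar_blade)
qed

lemma E_anti:
  assumes n: "even n"
  shows "cl_mult (blade (S2 n)) (blade (S1 n)) = cl_smul (-1) (cl_mult (blade (S1 n)) (blade (S2 n)))"
proof -
  have f1: "finite (S1 n)" and f2: "finite (S2 n)" by auto
  have I: "S1 n \<inter> S2 n = {1..n}" by auto
  have "bsign (S1 n) (S2 n) * bsign (S2 n) (S1 n) = (-1) ^ ((n + 1) * (n + 1) + n)"
    using bsign_swap[OF f1 f2] I by simp
  also have "\<dots> = -1" using n by (simp add: algebra_simps)
  finally have "bsign (S2 n) (S1 n) = - bsign (S1 n) (S2 n)" using prodm1_eq bsign_sq by metis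
  moreover have "sd (S2 n) (S1 n) = sd (S1 n) (S2 n)" by blast
  ultimately show ?thesis
    unfolding blade_mult[OF f1 f2] blade_mult[OF f2 f1] by (simp add: cl_smul_def fun_eq_iff)
qed

definition extr :: "nat \<Rightarrow> nat set \<Rightarrow> complex \<Rightarrow> cl \<Rightarrow> cl" where
  "extr n W c a = (\<lambda>B. if B \<subseteq> {1..n} then a (sd B W) / (c * bsign B W) else 0)"

lemma extr_in_C: "in_C n (extr n W c a)"
  unfolding in_C_def extr_def by auto

lemma extr_mult:
  assumes W: "W \<subseteq> {1..n+2}" and c: "c \<noteq> 0"
  shows "cl_mult (extr n W c a) (cl_smul c (blade W)) C = (if sd C W \<subseteq> {1..n} then a C else 0)"
proof -
  have K: "finite {1..n+2}" by simp
  have yK: "in_K {1..n+2} (extr n W c a)" using extr_in_C[of n W c a] unfolding in_C_K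
    by (rule in_K_mono) auto
  have e: "sd (sd C W) W = C" by blast
  show ?thesis
    unfolding mult_blade_right[OF K yK W]
    using c bsign_nz[of "sd C W" W] by (simp add: extr_def e)
qed

lemma mu_blade: "mu n = cl_smul (bsign (S1 n) (S2 n)) (blade {Suc n, Suc (Suc n)})"
proof -
  have e: "sd (S1 n) (S2 n) = {Suc n, Suc (Suc n)}" by auto
  have "mu n = cl_smul (bsign (S1 n) (S2 n)) (blade (sd (S1 n) (S2 n)))"
    unfolding mu_def E1_blade E2_blade by (rule blade_mult) auto
  thus ?thesis unfolding e .
qed

lemma decomp:
  assumes a: "in_C (n + 2) a"
  shows "\<exists>a0 a1 a2 a3. in_C n a0 \<and> in_C n a1 \<and> in_C n a2 \<and> in_C n a3 \<and>
     a = cl_add (cl_add (cl_add a0 (cl_mult a1 (E1 n))) (cl_mult a2 (E2 n))) (cl_mult a3 (mu n))"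
proof -
  define W where "W = {Suc n, Suc (Suc n)}"
  define \<sigma> where "\<sigma> = bsign (S1 n) (S2 n)"
  have s0: "\<sigma> \<noteq> 0" unfolding \<sigma>_def by (rule bsign_nz)
  define a0 where "a0 = (\<lambda>B. if B \<subseteq> {1..n} then a B else 0)"
  define a1 where "a1 = extr n (S1 n) 1 a"
  define a2 where "a2 = extr n (S2 n) 1 a"
  define a3 where "a3 = extr n W \<sigma> a"
  have i0: "in_C n a0" unfolding in_C_def a0_def by auto
  have E1': "E1 n = cl_smul 1 (blade (S1 n))" by (simp add: E1_blade cl_smul_1)
  have E2': "E2 n = cl_smul 1 (blade (S2 n))" by (simp add: E2_blade cl_smul_1)
  have mu': "mu n = cl_smul \<sigma> (blade W)" unfolding W_def \<sigma>_def by (rule mu_blade)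
  have m1: "cl_mult a1 (E1 n) C = (if sd C (S1 n) \<subseteq> {1..n} then a C else 0)" for C
    unfolding E1' a1_def by (rule extr_mult) auto
  have m2: "cl_mult a2 (E2 n) C = (if sd C (S2 n) \<subseteq> {1..n} then a C else 0)" for C
    unfolding E2' a2_def by (rule extr_mult) auto
  have m3: "cl_mult a3 (mu n) C = (if sd C W \<subseteq> {1..n} then a C else 0)" for C
    unfolding mu' a3_def by (rule extr_mult) (auto simp: W_def s0)
  have eq: "a = cl_add (cl_add (cl_add a0 (cl_mult a1 (E1 n))) (cl_mult a2 (E2 n))) (cl_mult a3 (mu n))"
  proof
    fix C
    show "a C = cl_add (cl_add (cl_add a0 (cl_mult a1 (E1 n))) (cl_mult a2 (E2 n))) (cl_mult a3 (mu n)) C"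
    proof (cases "a C = 0")
      case True thus ?thesis by (simp add: cl_add_def m1 m2 m3 a0_def)
    next
      case False
      hence C: "C \<subseteq> {1..n+2}" using a unfolding in_C_def by blast
      have Cn: "C - {Suc n, Suc (Suc n)} \<subseteq> {1..n}"
      proof
        fix x assume "x \<in> C - {Suc n, Suc (Suc n)}"
        thus "x \<in> {1..n}" using C by auto
      qed
      show ?thesis
      proof (cases "Suc n \<in> C"; cases "Suc (Suc n) \<in> C")
        assume h: "Suc n \<in> C" "Suc (Suc n) \<in> C"
        have f0: "\<not> C \<subseteq> {1..n}" and f1: "\<not> sd C (S1 n) \<subseteq> {1..n}" and f2: "\<not> sd C (S2 n) \<subseteq> {1..n}"
          using h by auto
        have f3: "sd C W \<subseteq> {1..n}" using h Cn W_def by auto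
        show ?thesis unfolding cl_add_def m1 m2 m3 a0_def if_P[OF f3] if_not_P[OF f0] if_not_P[OF f1] if_not_P[OF f2] by simp
      next
        assume h: "Suc n \<in> C" "Suc (Suc n) \<notin> C"
        have f0: "\<not> C \<subseteq> {1..n}" and f3: "\<not> sd C W \<subseteq> {1..n}" and f2: "\<not> sd C (S2 n) \<subseteq> {1..n}"
          using h W_def by auto
        have f1: "sd C (S1 n) \<subseteq> {1..n}"
        proof
          fix x assume x: "x \<in> sd C (S1 n)"
          show "x \<in> {1..n}"
          proof (cases "x \<in> C")
            case True
            hence "x \<in> C - {Suc n, Suc (Suc n)}" using x h by auto
            thus ?thesis using Cn by blast
          next
            case False
            hence "x \<in> {1..Suc n}" "x \<noteq> Suc n" using x h by auto
            thus ?thesis by auto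
          qed
        qed
        show ?thesis unfolding cl_add_def m1 m2 m3 a0_def if_P[OF f1] if_not_P[OF f0] if_not_P[OF f3] if_not_P[OF f2] by simp
      next
        assume h: "Suc n \<notin> C" "Suc (Suc n) \<in> C"
        have f0: "\<not> C \<subseteq> {1..n}" and f3: "\<not> sd C W \<subseteq> {1..n}" and f1: "\<not> sd C (S1 n) \<subseteq> {1..n}"
          using h W_def by auto
        have f2: "sd C (S2 n) \<subseteq> {1..n}" using h Cn by auto
        show ?thesis unfolding cl_add_def m1 m2 m3 a0_def if_P[OF f2] if_not_P[OF f0] if_not_P[OF f3] if_not_P[OF f1] by simp
      next
        assume h: "Suc n \<notin> C" "Suc (Suc n) \<notin> C"
        have f2: "\<not> sd C (S2 n) \<subseteq> {1..n}" and f3: "\<not> sd C W \<subseteq> {1..n}"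
          using h W_def by auto
        have f1: "\<not> sd C (S1 n) \<subseteq> {1..n}"
        proof
          assume "sd C (S1 n) \<subseteq> {1..n}"
          moreover have "Suc n \<in> sd C (S1 n)" using h by auto
          ultimately have "Suc n \<in> {1..n}" by blast
          thus False by simp
        qed
        have f0: "C \<subseteq> {1..n}" using h Cn by auto
        show ?thesis unfolding cl_add_def m1 m2 m3 a0_def if_P[OF f0] if_not_P[OF f2] if_not_P[OF f3] if_not_P[OF f1] by simp
      qed
    qed
  qed
  show ?thesis
    using i0 extr_in_C eq unfolding a1_def a2_def a3_def by blast
qed

definition im :: "nat \<Rightarrow> nat \<Rightarrow> nat" where "im d i = (if i < d then i else i - d)"

definition PNr :: "nat \<Rightarrow> (nat \<Rightarrow> nat \<Rightarrow> clf) \<Rightarrow> clf \<Rightarrow> clf \<Rightarrow> complex \<Rightarrow> complex \<Rightarrow> nat \<Rightarrow> nat \<Rightarrow> clf" where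
  "PNr d Pr e1 e2 r s i j = sc (1/2) * (Xm e1 e2 r s (d \<le> i) (d \<le> j) * Pr (im d i) (im d j))"

definition PNr' :: "nat \<Rightarrow> (nat \<Rightarrow> nat \<Rightarrow> clf) \<Rightarrow> clf \<Rightarrow> clf \<Rightarrow> complex \<Rightarrow> complex \<Rightarrow> nat \<Rightarrow> nat \<Rightarrow> clf" where
  "PNr' d Qr e1 e2 r s i j = sc (1/2) * (Qr (im d i) (im d j) * Xm e1 e2 r s (d \<le> i) (d \<le> j))"

lemma sum_split2: fixes f :: "nat \<Rightarrow> 'a::comm_monoid_add" and d :: nat
  shows "(\<Sum>j<2*d. f j) = (\<Sum>j<d. f j) + (\<Sum>j<d. f (j + d))"
proof -
  have "(\<Sum>j<2*d. f j) = (\<Sum>j<d. f j) + (\<Sum>j\<in>{d..<d+d}. f j)"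
    by (simp add: mult_2 lessThan_atLeast0 sum.atLeastLessThan_concat)
  also have "(\<Sum>j\<in>{d..<d+d}. f j) = (\<Sum>j<d. f (j + d))"
    using sum.shift_bounds_nat_ivl[of f 0 d d] by (simp add: lessThan_atLeast0)
  finally show ?thesis .
qed

lemma hq_commute:
  assumes "Y * e1 = e1 * Y" "Y * e2 = e2 * Y"
  shows "Y * hq e1 e2 c0 c1 c2 c3 = hq e1 e2 c0 c1 c2 c3 * Y"
proof -
  have a: "Y * (sc c * e) = (sc c * e) * Y" if "Y * e = e * Y" for c e
    by (metis mult.assoc sc_central that)
  have b: "Y * (sc c * (e1 * e2)) = (sc c * (e1 * e2)) * Y" for c
    by (metis a assms mult.assoc)
  have c: "Y * sc c0 = sc c0 * Y" by (rule sc_central[symmetric])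
  show ?thesis unfolding hq_def distrib_left distrib_right
    by (simp only: a[OF assms(1)] a[OF assms(2)] b c)
qed

lemma Xm_commute:
  assumes "Y * e1 = e1 * Y" "Y * e2 = e2 * Y"
  shows "Y * Xm e1 e2 r s p q = Xm e1 e2 r s p q * Y"
  unfolding Xm_def using hq_commute[OF assms] by simp

lemma sc_pair: "(sc a * x) * (sc b * y) = sc (a*b) * (x * y)"
proof -
  have "(sc a * x) * (sc b * y) = sc a * (x * (sc b * y))" by (simp only: mult.assoc)
  also have "x * (sc b * y) = sc b * (x * y)" by (rule sc_mult_left)
  finally show ?thesis by (simp only: sc_mult_sc)
qed

lemma sum_conj:
  "(\<Sum>j<d. (sc h * (X * P j)) * A * (sc h * (Q j * Y))) = sc (h*h) * (X * (\<Sum>j<d. P j * A * Q j) * Y)"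
proof -
  have e: "(sc h * (X * P j)) * A * (sc h * (Q j * Y)) = sc (h*h) * (X * (P j * A * Q j) * Y)" for j
  proof -
    have "(sc h * (X * P j)) * A * (sc h * (Q j * Y)) = (sc h * (X * P j * A)) * (sc h * (Q j * Y))"
      by (simp only: mult.assoc)
    also have "\<dots> = sc (h*h) * ((X * P j * A) * (Q j * Y))" by (rule sc_pair)
    also have "\<dots> = sc (h*h) * (X * (P j * A * Q j) * Y)" by (simp only: mult.assoc)
    finally show ?thesis .
  qed
  show ?thesis unfolding e by (simp add: sum_distrib_left sum_distrib_right)
qed

lemma blocksum:
  assumes "i < 2*d" "k < 2*d"
  shows "(\<Sum>j<2*d. PNr d Pr e1 e2 r s i j * A * PNr' d Qr e1 e2 r s j k)
    = sc (1/4) * (Xm e1 e2 r s (d \<le> i) False * (\<Sum>j<d. Pr (im d i) j * A * Qr j (im d k)) * Xm e1 e2 r s False (d \<le> k)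
                + Xm e1 e2 r s (d \<le> i) True * (\<Sum>j<d. Pr (im d i) j * A * Qr j (im d k)) * Xm e1 e2 r s True (d \<le> k))"
proof -
  have h: "(1::complex)/2 * (1/2) = 1/4" by simp
  have s1: "(\<Sum>j<d. PNr d Pr e1 e2 r s i j * A * PNr' d Qr e1 e2 r s j k)
     = sc (1/4) * (Xm e1 e2 r s (d \<le> i) False * (\<Sum>j<d. Pr (im d i) j * A * Qr j (im d k)) * Xm e1 e2 r s False (d \<le> k))"
  proof -
    have "(\<Sum>j<d. PNr d Pr e1 e2 r s i j * A * PNr' d Qr e1 e2 r s j k)
       = (\<Sum>j<d. (sc (1/2) * (Xm e1 e2 r s (d \<le> i) False * Pr (im d i) j)) * A * (sc (1/2) * (Qr j (im d k) * Xm e1 e2 r s False (d \<le> k))))"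
      by (rule sum.cong) (auto simp: PNr_def PNr'_def im_def)
    thus ?thesis by (simp only: sum_conj h)
  qed
  have s2: "(\<Sum>j<d. PNr d Pr e1 e2 r s i (j + d) * A * PNr' d Qr e1 e2 r s (j + d) k)
     = sc (1/4) * (Xm e1 e2 r s (d \<le> i) True * (\<Sum>j<d. Pr (im d i) j * A * Qr j (im d k)) * Xm e1 e2 r s True (d \<le> k))"
  proof -
    have "(\<Sum>j<d. PNr d Pr e1 e2 r s i (j + d) * A * PNr' d Qr e1 e2 r s (j + d) k)
       = (\<Sum>j<d. (sc (1/2) * (Xm e1 e2 r s (d \<le> i) True * Pr (im d i) j)) * A * (sc (1/2) * (Qr j (im d k) * Xm e1 e2 r s True (d \<le> k))))"
      by (rule sum.cong) (auto simp: PNr_def PNr'_def im_def)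
    thus ?thesis by (simp only: sum_conj h)
  qed
  show ?thesis unfolding sum_split2 s1 s2 distrib_left ..
qed

lemma sum_conj':
  assumes "\<And>j. j < d \<Longrightarrow> Q j * X = X * Q j" "\<And>j. j < d \<Longrightarrow> Q j * Y = Y * Q j"
  shows "(\<Sum>j<d. (sc h * (Q j * X)) * (sc h * (Y * P j))) = sc (h*h) * (X * (Y * (\<Sum>j<d. Q j * P j)))"
proof -
  have "(sc h * (Q j * X)) * (sc h * (Y * P j)) = sc (h*h) * (X * (Y * (Q j * P j)))" if "j < d" for j
  proof -
    have "(sc h * (Q j * X)) * (sc h * (Y * P j)) = sc (h*h) * ((Q j * X) * (Y * P j))"
      by (rule sc_pair)
    also have "(Q j * X) * (Y * P j) = (X * Q j) * (Y * P j)" by (simp only: assms(1)[OF that])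
    also have "\<dots> = X * ((Q j * Y) * P j)" by (simp only: mult.assoc)
    also have "\<dots> = X * ((Y * Q j) * P j)" by (simp only: assms(2)[OF that])
    also have "\<dots> = X * (Y * (Q j * P j))" by (simp only: mult.assoc)
    finally show ?thesis .
  qed
  thus ?thesis by (simp add: sum_distrib_left)
qed

lemma blocksum':
  assumes "i < 2*d" "k < 2*d"
    and cQ: "\<And>a b. a < d \<Longrightarrow> b < d \<Longrightarrow> Qr a b * e1 = e1 * Qr a b \<and> Qr a b * e2 = e2 * Qr a b"
  shows "(\<Sum>j<2*d. PNr' d Qr e1 e2 r s i j * PNr d Pr e1 e2 r s j k)
    = sc (1/4) * (Xm e1 e2 r s (d \<le> i) False * (Xm e1 e2 r s False (d \<le> k) * (\<Sum>j<d. Qr (im d i) j * Pr j (im d k)))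
                + Xm e1 e2 r s (d \<le> i) True * (Xm e1 e2 r s True (d \<le> k) * (\<Sum>j<d. Qr (im d i) j * Pr j (im d k))))"
proof -
  have h: "(1::complex)/2 * (1/2) = 1/4" by simp
  have ii: "im d i < d" using assms(1) by (auto simp: im_def)
  have cX: "Qr (im d i) j * Xm e1 e2 r s p q = Xm e1 e2 r s p q * Qr (im d i) j" if "j < d" for j p q
  proof -
    from cQ[OF ii that] have "Qr (im d i) j * e1 = e1 * Qr (im d i) j" "Qr (im d i) j * e2 = e2 * Qr (im d i) j"
      by auto
    thus ?thesis by (rule Xm_commute)
  qed
  have s1: "(\<Sum>j<d. PNr' d Qr e1 e2 r s i j * PNr d Pr e1 e2 r s j k)
     = sc (1/4) * (Xm e1 e2 r s (d \<le> i) False * (Xm e1 e2 r s False (d \<le> k) * (\<Sum>j<d. Qr (im d i) j * Pr j (im d k))))"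
  proof -
    have "(\<Sum>j<d. PNr' d Qr e1 e2 r s i j * PNr d Pr e1 e2 r s j k)
       = (\<Sum>j<d. (sc (1/2) * (Qr (im d i) j * Xm e1 e2 r s (d \<le> i) False)) * (sc (1/2) * (Xm e1 e2 r s False (d \<le> k) * Pr j (im d k))))"
      by (rule sum.cong) (auto simp: PNr_def PNr'_def im_def)
    also have "\<dots> = sc (1/4) * (Xm e1 e2 r s (d \<le> i) False * (Xm e1 e2 r s False (d \<le> k) * (\<Sum>j<d. Qr (im d i) j * Pr j (im d k))))"
      unfolding h[symmetric] by (rule sum_conj') (erule cX)+
    finally show ?thesis .
  qed
  have s2: "(\<Sum>j<d. PNr' d Qr e1 e2 r s i (j + d) * PNr d Pr e1 e2 r s (j + d) k)
     = sc (1/4) * (Xm e1 e2 r s (d \<le> i) True * (Xm e1 e2 r s True (d \<le> k) * (\<Sum>j<d. Qr (im d i) j * Pr j (im d k))))"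
  proof -
    have "(\<Sum>j<d. PNr' d Qr e1 e2 r s i (j + d) * PNr d Pr e1 e2 r s (j + d) k)
       = (\<Sum>j<d. (sc (1/2) * (Qr (im d i) j * Xm e1 e2 r s (d \<le> i) True)) * (sc (1/2) * (Xm e1 e2 r s True (d \<le> k) * Pr j (im d k))))"
      by (rule sum.cong) (auto simp: PNr_def PNr'_def im_def)
    also have "\<dots> = sc (1/4) * (Xm e1 e2 r s (d \<le> i) True * (Xm e1 e2 r s True (d \<le> k) * (\<Sum>j<d. Qr (im d i) j * Pr j (im d k))))"
      unfolding h[symmetric] by (rule sum_conj') (erule cX)+
    finally show ?thesis .
  qed
  show ?thesis unfolding sum_split2 s1 s2 distrib_left ..
qed

lemma mmul_lift:
  assumes "\<forall>j<D. M i j = rep (M' j)" "\<forall>j<D. N j k = rep (N' j)"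
  shows "mmul D M N i k = rep (\<Sum>j<D. M' j * N' j)"
  unfolding mmul_def rep_sum[OF finite_lessThan]
  by (intro ext sum.cong refl) (use assms in \<open>auto simp: rep_mult\<close>)

lemma mdiag_rep: "fin_cl a \<Longrightarrow> mdiag a l j = rep (if l = j then abs a else 0)"
  by (simp add: mdiag_def rep_abs rep_zero)

lemma sum_delta_mult:
  fixes M :: "nat \<Rightarrow> clf"
  assumes "j < D"
  shows "(\<Sum>l<D. M l * (if l = j then A else 0)) = M j * A"
proof -
  have "(\<Sum>l<D. M l * (if l = j then A else 0)) = (\<Sum>l<D. if l = j then M l * A else 0)"
    by (rule sum.cong) auto
  thus ?thesis using assms by simp
qed

lemma conj_lift:
  assumes M: "\<forall>l<D. M i l = rep (M' l)" and N: "\<forall>j<D. N j k = rep (N' j)" and a: "fin_cl a"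
  shows "mmul D (mmul D M (mdiag a)) N i k = rep (\<Sum>j<D. M' j * abs a * N' j)"
proof -
  have "\<forall>j<D. mmul D M (mdiag a) i j = rep (M' j * abs a)"
  proof (intro allI impI)
    fix j assume j: "j < D"
    have "mmul D M (mdiag a) i j = rep (\<Sum>l<D. M' l * (if l = j then abs a else 0))"
      by (rule mmul_lift) (use M mdiag_rep[OF a] in auto)
    also have "\<dots> = rep (M' j * abs a)" using sum_delta_mult[OF j] by simp
    finally show "mmul D M (mdiag a) i j = rep (M' j * abs a)" .
  qed
  from this N show ?thesis by (rule mmul_lift)
qed

lemma scalar_eq: "cl_is_scalar x \<Longrightarrow> x = cl_scalar (x {})"
  unfolding cl_is_scalar_def cl_scalar_def by auto

lemma rep_eq_sc: "rep X = cl_scalar c \<Longrightarrow> X = sc c"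
  by (metis rep_inject rep_sc)

lemma expv_delta:
  assumes "i < 2*d" "k < 2*d"
  shows "expv r s (d \<le> i) (d \<le> k) (if im d i = im d k then 1 else 0) 0 0 0 = (if i = k then 1 else 0)"
  using assms unfolding expv_def im_def by auto

lemma rhs_entry:
  assumes "i < 2*d" "k < 2*d"
    and F: "Fa (im d i) (im d k) = cl_scalar ga" "Fb (im d i) (im d k) = cl_scalar gb"
           "Fc (im d i) (im d k) = cl_scalar gc" "Fd (im d i) (im d k) = cl_scalar gd"
  shows "blk d (madd Fa (msmul s Fb)) (msmul r (madd Fc (msmul s Fd))) (msub Fc (msmul s Fd)) (msub Fa (msmul s Fb)) i k
     = cl_scalar (expv r s (d \<le> i) (d \<le> k) ga gb gc gd)"
proof (cases "i < d"; cases "k < d")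
  assume "i < d" "k < d"
  thus ?thesis using F unfolding im_def
    by (simp add: blk_def madd_def msub_def msmul_def cl_add_def cl_sub_def cl_smul_def cl_scalar_def expv_def fun_eq_iff)
next
  assume "i < d" "\<not> k < d"
  thus ?thesis using F unfolding im_def
    by (simp add: blk_def madd_def msub_def msmul_def cl_add_def cl_sub_def cl_smul_def cl_scalar_def expv_def fun_eq_iff algebra_simps)
next
  assume "\<not> i < d" "k < d"
  thus ?thesis using F unfolding im_def
    by (simp add: blk_def madd_def msub_def msmul_def cl_add_def cl_sub_def cl_smul_def cl_scalar_def expv_def fun_eq_iff)
next
  assume "\<not> i < d" "\<not> k < d"
  thus ?thesis using F unfolding im_def
    by (simp add: blk_def madd_def msub_def msmul_def cl_add_def cl_sub_def cl_smul_def cl_scalar_def expv_def fun_eq_iff)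
qed

lemma rep_hq: "rep (hq e1 e2 c0 c1 c2 c3) = (\<lambda>A. cl_scalar c0 A + c1 * rep e1 A + c2 * rep e2 A + c3 * cl_mult (rep e1) (rep e2) A)"
  unfolding hq_def by (simp only: rep_add rep_sc rep_sc_mult) (simp add: rep_mult cl_add_def cl_smul_def)

theorem theorem15:
  fixes n :: nat and P Q :: clmat and r s :: complex
  defines "d \<equiv> 2 ^ (n div 2)"
  assumes n_even: "even n"
    and P_in: "mat_in_C n d P" and Q_in: "mat_in_C n d Q"
    and PQ: "is_inverse d P Q"
    and phi_scalar: "\<forall>a. in_C n a \<longrightarrow> mat_scalar d (phi d P Q a)"
    and r_def: "r = (-1) ^ ((n + 1) * (n + 2) div 2)"
    and s_sqrt: "s ^ 2 = r"
  shows "cl_mult (E1 n) (E1 n) = cl_scalar r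
       \<and> cl_mult (E2 n) (E2 n) = cl_scalar r
       \<and> mu n = cl_smul (-1) (cl_mult (E2 n) (E1 n))
       \<and> (\<forall>a. in_C (n + 2) a \<longrightarrow>
            (\<exists>a0 a1 a2 a3. in_C n a0 \<and> in_C n a1 \<and> in_C n a2 \<and> in_C n a3 \<and>
               a = cl_add (cl_add (cl_add a0 (cl_mult a1 (E1 n))) (cl_mult a2 (E2 n)))
                          (cl_mult a3 (mu n))))
       \<and> is_inverse (2 * d) (Pnext n r s d P) (Pnext' n r s d Q)
       \<and> (\<forall>a a0 a1 a2 a3. in_C n a0 \<and> in_C n a1 \<and> in_C n a2 \<and> in_C n a3 \<and>
            a = cl_add (cl_add (cl_add a0 (cl_mult a1 (E1 n))) (cl_mult a2 (E2 n)))
                       (cl_mult a3 (mu n)) \<longrightarrow>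
            meq (2 * d) (mmul (2 * d) (mmul (2 * d) (Pnext n r s d P) (mdiag a)) (Pnext' n r s d Q))
              (blk d
                 (madd (phi d P Q a0) (msmul s (phi d P Q a1)))
                 (msmul r (madd (phi d P Q a2) (msmul s (phi d P Q a3))))
                 (msub (phi d P Q a2) (msmul s (phi d P Q a3)))
                 (msub (phi d P Q a0) (msmul s (phi d P Q a1))))
            \<and> mat_scalar (2 * d) (mmul (2 * d) (mmul (2 * d) (Pnext n r s d P) (mdiag a)) (Pnext' n r s d Q)))"
proof -
  have r0: "r \<noteq> 0" unfolding r_def by simp
  have rs: "r = s * s" using s_sqrt by (simp add: power2_eq_square)
  have s0: "s \<noteq> 0" using r0 rs by auto
  have fE1: "fin_cl (E1 n)" by (simp add: E1_blade fin_cl_blade)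
  have fE2: "fin_cl (E2 n)" by (simp add: E2_blade fin_cl_blade)
  define e1 where "e1 = abs (E1 n)"
  define e2 where "e2 = abs (E2 n)"
  have re1: "rep e1 = E1 n" unfolding e1_def using fE1 by (rule rep_abs)
  have re2: "rep e2 = E2 n" unfolding e2_def using fE2 by (rule rep_abs)
  have mu_eq: "mu n = cl_mult (E1 n) (E2 n)" by (simp add: mu_def)
  have P1: "cl_mult (E1 n) (E1 n) = cl_scalar r" unfolding E1_blade r_def by (rule E_sq) simp
  have P2: "cl_mult (E2 n) (E2 n) = cl_scalar r" unfolding E2_blade r_def by (rule E_sq) simp
  have anti: "cl_mult (E2 n) (E1 n) = cl_smul (-1) (cl_mult (E1 n) (E2 n))"
    unfolding E1_blade E2_blade by (rule E_anti[OF n_even])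
  have P3: "mu n = cl_smul (-1) (cl_mult (E2 n) (E1 n))"
    unfolding anti mu_def by (simp add: cl_smul_def)
  have P4: "\<forall>a. in_C (n + 2) a \<longrightarrow>
            (\<exists>a0 a1 a2 a3. in_C n a0 \<and> in_C n a1 \<and> in_C n a2 \<and> in_C n a3 \<and>
               a = cl_add (cl_add (cl_add a0 (cl_mult a1 (E1 n))) (cl_mult a2 (E2 n)))
                          (cl_mult a3 (mu n)))"
    using decomp by blast
  have R1: "e1 * e1 = sc r" by (rule rep_eq_sc) (simp add: rep_mult re1 P1)
  have R2: "e2 * e2 = sc r" by (rule rep_eq_sc) (simp add: rep_mult re2 P2)
  have R3: "e2 * e1 = - (e1 * e2)"
  proof -
    have "rep (e2 * e1) = rep (sc (-1) * (e1 * e2))"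
      unfolding rep_sc_mult by (simp only: rep_mult re1 re2 anti)
    hence "e2 * e1 = sc (-1) * (e1 * e2)" by (simp add: rep_inject)
    thus ?thesis by (simp add: sc_neg sc_1)
  qed
  have comm: "abs y * e1 = e1 * abs y \<and> abs y * e2 = e2 * abs y" if y: "in_C n y" for y
  proof -
    have fy: "fin_cl y" using y by (rule fin_cl_in_C)
    have "rep (abs y * e1) = rep (e1 * abs y)"
      by (simp add: rep_mult rep_abs[OF fy] re1 E1_blade commute_Cn[OF n_even y])
    moreover have "rep (abs y * e2) = rep (e2 * abs y)"
      by (simp add: rep_mult rep_abs[OF fy] re2 E2_blade commute_Cn[OF n_even y])
    ultimately show ?thesis by (simp add: rep_inject)
  qed
  define Pr where "Pr = (\<lambda>i j. abs (P i j))"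
  define Qr where "Qr = (\<lambda>i j. abs (Q i j))"
  have inP: "i < d \<Longrightarrow> j < d \<Longrightarrow> in_C n (P i j)" for i j using P_in unfolding mat_in_C_def by blast
  have inQ: "i < d \<Longrightarrow> j < d \<Longrightarrow> in_C n (Q i j)" for i j using Q_in unfolding mat_in_C_def by blast
  have rP: "i < d \<Longrightarrow> j < d \<Longrightarrow> rep (Pr i j) = P i j" for i j
    unfolding Pr_def by (rule rep_abs, rule fin_cl_in_C, rule inP)
  have rQ: "i < d \<Longrightarrow> j < d \<Longrightarrow> rep (Qr i j) = Q i j" for i j
    unfolding Qr_def by (rule rep_abs, rule fin_cl_in_C, rule inQ)
  have cP: "i < d \<Longrightarrow> j < d \<Longrightarrow> Pr i j * e1 = e1 * Pr i j \<and> Pr i j * e2 = e2 * Pr i j" for i j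
    unfolding Pr_def by (rule comm, rule inP)
  have cQ: "i < d \<Longrightarrow> j < d \<Longrightarrow> Qr i j * e1 = e1 * Qr i j \<and> Qr i j * e2 = e2 * Qr i j" for i j
    unfolding Qr_def by (rule comm, rule inQ)
  have eb: "ebar (Suc n) = E1 n" by (simp add: E1_def)
  have X1: "rep (Xm e1 e2 r s False False) = cl_add (cl_scalar 1) (cl_smul (1/s) (ebar (Suc n)))"
    unfolding Xm_def eb by (simp add: rep_hq re1 re2 cl_add_def cl_smul_def fun_eq_iff)
  have X2: "rep (Xm e1 e2 r s False True) = cl_sub (E2 n) (cl_smul (1/s) (mu n))"
    unfolding Xm_def by (simp add: rep_hq re1 re2 mu_eq cl_sub_def cl_smul_def cl_scalar_def fun_eq_iff)
  have X3: "rep (Xm e1 e2 r s True False) = cl_smul (1/r) (cl_add (E2 n) (cl_smul (1/s) (mu n)))"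
    unfolding Xm_def by (simp add: rep_hq re1 re2 mu_eq cl_add_def cl_smul_def cl_scalar_def fun_eq_iff algebra_simps)
  have X4: "rep (Xm e1 e2 r s True True) = cl_sub (cl_scalar 1) (cl_smul (1/s) (ebar (Suc n)))"
    unfolding Xm_def eb by (simp add: rep_hq re1 re2 cl_sub_def cl_smul_def fun_eq_iff)
  have PN: "Pnext n r s d P i j = rep (PNr d Pr e1 e2 r s i j)" if "i < 2*d" "j < 2*d" for i j
    unfolding PNr_def rep_sc_mult unfolding rep_mult
    using that by (cases "i < d"; cases "j < d")
      (simp_all add: Pnext_def msmul_def blk_def mlmul_def im_def X1 X2 X3 X4 rP)
  have PN': "Pnext' n r s d Q i j = rep (PNr' d Qr e1 e2 r s i j)" if "i < 2*d" "j < 2*d" for i j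
    unfolding PNr'_def rep_sc_mult unfolding rep_mult
    using that by (cases "i < d"; cases "j < d")
      (simp_all add: Pnext'_def msmul_def blk_def mrmul_def im_def X1 X2 X3 X4 rQ)
  have mdiag1: "mdiag (cl_scalar 1) i k = rep (sc (if i = k then 1 else 0))" for i k
    by (simp add: mdiag_def rep_sc)
  have inv1: "(\<Sum>j<d. Pr i j * Qr j k) = sc (if i = k then 1 else 0)" if "i < d" "k < d" for i k
  proof (rule rep_eq_sc)
    have "rep (\<Sum>j<d. Pr i j * Qr j k) = mmul d P Q i k"
      by (rule mmul_lift[symmetric]) (use that rP rQ in auto)
    also have "\<dots> = mdiag (cl_scalar 1) i k" using PQ that unfolding is_inverse_def meq_def by blast
    also have "\<dots> = cl_scalar (if i = k then 1 else 0)" by (simp add: mdiag_def)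
    finally show "rep (\<Sum>j<d. Pr i j * Qr j k) = cl_scalar (if i = k then 1 else 0)" .
  qed
  have inv2: "(\<Sum>j<d. Qr i j * Pr j k) = sc (if i = k then 1 else 0)" if "i < d" "k < d" for i k
  proof (rule rep_eq_sc)
    have "rep (\<Sum>j<d. Qr i j * Pr j k) = mmul d Q P i k"
      by (rule mmul_lift[symmetric]) (use that rP rQ in auto)
    also have "\<dots> = mdiag (cl_scalar 1) i k" using PQ that unfolding is_inverse_def meq_def by blast
    also have "\<dots> = cl_scalar (if i = k then 1 else 0)" by (simp add: mdiag_def)
    finally show "rep (\<Sum>j<d. Qr i j * Pr j k) = cl_scalar (if i = k then 1 else 0)" .
  qed
  have imd: "i < 2*d \<Longrightarrow> im d i < d" for i by (auto simp: im_def)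
  note BI = block_id[OF R1 R2 R3 rs s0]
  have P5a: "mmul (2*d) (Pnext n r s d P) (Pnext' n r s d Q) i k = mdiag (cl_scalar 1) i k"
    if i: "i < 2*d" and k: "k < 2*d" for i k
  proof -
    let ?\<delta> = "if im d i = im d k then (1::complex) else 0"
    have "mmul (2*d) (Pnext n r s d P) (Pnext' n r s d Q) i k
        = rep (\<Sum>j<2*d. PNr d Pr e1 e2 r s i j * PNr' d Qr e1 e2 r s j k)"
      by (rule mmul_lift) (use PN PN' i k in auto)
    also have "(\<Sum>j<2*d. PNr d Pr e1 e2 r s i j * PNr' d Qr e1 e2 r s j k)
        = (\<Sum>j<2*d. PNr d Pr e1 e2 r s i j * 1 * PNr' d Qr e1 e2 r s j k)" by simp
    also have "\<dots> = sc (1/4) * (Xm e1 e2 r s (d \<le> i) False * (\<Sum>j<d. Pr (im d i) j * 1 * Qr j (im d k)) * Xm e1 e2 r s False (d \<le> k)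
                + Xm e1 e2 r s (d \<le> i) True * (\<Sum>j<d. Pr (im d i) j * 1 * Qr j (im d k)) * Xm e1 e2 r s True (d \<le> k))"
      by (rule blocksum[OF i k])
    also have "(\<Sum>j<d. Pr (im d i) j * 1 * Qr j (im d k)) = hq e1 e2 ?\<delta> 0 0 0"
      using inv1[OF imd[OF i] imd[OF k]] by (simp add: hq_scalar)
    also have "sc (1/4) * (Xm e1 e2 r s (d \<le> i) False * hq e1 e2 ?\<delta> 0 0 0 * Xm e1 e2 r s False (d \<le> k)
                + Xm e1 e2 r s (d \<le> i) True * hq e1 e2 ?\<delta> 0 0 0 * Xm e1 e2 r s True (d \<le> k))
             = sc (expv r s (d \<le> i) (d \<le> k) ?\<delta> 0 0 0)" by (rule BI)
    also have "\<dots> = sc (if i = k then 1 else 0)" by (simp only: expv_delta[OF i k])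
    finally show ?thesis by (simp add: mdiag1)
  qed
  have XY: "X * (Y * sc c) = X * hq e1 e2 c 0 0 0 * Y" for X Y c
  proof -
    have "Y * sc c = sc c * Y" by (rule sc_central[symmetric])
    thus ?thesis by (simp add: hq_scalar mult.assoc)
  qed
  have P5b: "mmul (2*d) (Pnext' n r s d Q) (Pnext n r s d P) i k = mdiag (cl_scalar 1) i k"
    if i: "i < 2*d" and k: "k < 2*d" for i k
  proof -
    let ?\<delta> = "if im d i = im d k then (1::complex) else 0"
    have "mmul (2*d) (Pnext' n r s d Q) (Pnext n r s d P) i k
        = rep (\<Sum>j<2*d. PNr' d Qr e1 e2 r s i j * PNr d Pr e1 e2 r s j k)"
      by (rule mmul_lift) (use PN PN' i k in auto)
    also have "(\<Sum>j<2*d. PNr' d Qr e1 e2 r s i j * PNr d Pr e1 e2 r s j k)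
       = sc (1/4) * (Xm e1 e2 r s (d \<le> i) False * (Xm e1 e2 r s False (d \<le> k) * (\<Sum>j<d. Qr (im d i) j * Pr j (im d k)))
                + Xm e1 e2 r s (d \<le> i) True * (Xm e1 e2 r s True (d \<le> k) * (\<Sum>j<d. Qr (im d i) j * Pr j (im d k))))"
      by (rule blocksum'[OF i k cQ])
    also have "(\<Sum>j<d. Qr (im d i) j * Pr j (im d k)) = sc ?\<delta>"
      using inv2[OF imd[OF i] imd[OF k]] by simp
    also have "sc (1/4) * (Xm e1 e2 r s (d \<le> i) False * (Xm e1 e2 r s False (d \<le> k) * sc ?\<delta>)
                + Xm e1 e2 r s (d \<le> i) True * (Xm e1 e2 r s True (d \<le> k) * sc ?\<delta>))
             = sc (1/4) * (Xm e1 e2 r s (d \<le> i) False * hq e1 e2 ?\<delta> 0 0 0 * Xm e1 e2 r s False (d \<le> k)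
                + Xm e1 e2 r s (d \<le> i) True * hq e1 e2 ?\<delta> 0 0 0 * Xm e1 e2 r s True (d \<le> k))"
      by (simp only: XY)
    also have "\<dots> = sc (expv r s (d \<le> i) (d \<le> k) ?\<delta> 0 0 0)" by (rule BI)
    also have "\<dots> = sc (if i = k then 1 else 0)" by (simp only: expv_delta[OF i k])
    finally show ?thesis by (simp add: mdiag1)
  qed
  have P5: "is_inverse (2 * d) (Pnext n r s d P) (Pnext' n r s d Q)"
    unfolding is_inverse_def meq_def using P5a P5b by blast
  have finrep: "fin_cl (rep x)" for x using rep[of x] by simp
  have Gsc: "(\<Sum>j<d. Pr i j * abs y * Qr j k) = sc (phi d P Q y i k {})"
    if y: "in_C n y" and i: "i < d" and k: "k < d" for y i k
  proof (rule rep_eq_sc)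
    have "rep (\<Sum>j<d. Pr i j * abs y * Qr j k) = phi d P Q y i k"
      unfolding phi_def by (rule conj_lift[symmetric]) (use rP rQ i k fin_cl_in_C[OF y] in auto)
    also have "\<dots> = cl_scalar (phi d P Q y i k {})"
      using phi_scalar y i k scalar_eq unfolding mat_scalar_def by blast
    finally show "rep (\<Sum>j<d. Pr i j * abs y * Qr j k) = cl_scalar (phi d P Q y i k {})" .
  qed
  have P6: "meq (2 * d) (mmul (2 * d) (mmul (2 * d) (Pnext n r s d P) (mdiag a)) (Pnext' n r s d Q))
              (blk d
                 (madd (phi d P Q a0) (msmul s (phi d P Q a1)))
                 (msmul r (madd (phi d P Q a2) (msmul s (phi d P Q a3))))
                 (msub (phi d P Q a2) (msmul s (phi d P Q a3)))
                 (msub (phi d P Q a0) (msmul s (phi d P Q a1))))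
            \<and> mat_scalar (2 * d) (mmul (2 * d) (mmul (2 * d) (Pnext n r s d P) (mdiag a)) (Pnext' n r s d Q))"
    if a0: "in_C n a0" and a1: "in_C n a1" and a2: "in_C n a2" and a3: "in_C n a3"
      and aeq: "a = cl_add (cl_add (cl_add a0 (cl_mult a1 (E1 n))) (cl_mult a2 (E2 n))) (cl_mult a3 (mu n))"
    for a a0 a1 a2 a3
  proof -
    have f0: "fin_cl a0" and f1: "fin_cl a1" and f2: "fin_cl a2" and f3: "fin_cl a3"
      using a0 a1 a2 a3 fin_cl_in_C by auto
    define A where "A = abs a0 + abs a1 * e1 + abs a2 * e2 + abs a3 * (e1 * e2)"
    have aA: "a = rep A" unfolding A_def aeq mu_eq
      by (simp add: rep_add rep_mult rep_abs f0 f1 f2 f3 re1 re2)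
    have fa: "fin_cl a" using aA finrep by simp
    have absa: "abs a = A" using aA by (simp add: rep_inverse)
    have entry: "mmul (2 * d) (mmul (2 * d) (Pnext n r s d P) (mdiag a)) (Pnext' n r s d Q) i k
        = cl_scalar (expv r s (d \<le> i) (d \<le> k) (phi d P Q a0 (im d i) (im d k) {}) (phi d P Q a1 (im d i) (im d k) {})
                                (phi d P Q a2 (im d i) (im d k) {}) (phi d P Q a3 (im d i) (im d k) {}))"
      if i: "i < 2*d" and k: "k < 2*d" for i k
    proof -
      let ?i = "im d i" and ?k = "im d k"
      have ii: "?i < d" and kk: "?k < d" using imd i k by auto
      let ?g0 = "phi d P Q a0 ?i ?k {}" and ?g1 = "phi d P Q a1 ?i ?k {}"
        and ?g2 = "phi d P Q a2 ?i ?k {}" and ?g3 = "phi d P Q a3 ?i ?k {}"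
      have "mmul (2 * d) (mmul (2 * d) (Pnext n r s d P) (mdiag a)) (Pnext' n r s d Q) i k
          = rep (\<Sum>j<2*d. PNr d Pr e1 e2 r s i j * abs a * PNr' d Qr e1 e2 r s j k)"
        by (rule conj_lift) (use PN PN' i k fa in auto)
      also have "(\<Sum>j<2*d. PNr d Pr e1 e2 r s i j * abs a * PNr' d Qr e1 e2 r s j k)
         = sc (1/4) * (Xm e1 e2 r s (d \<le> i) False * (\<Sum>j<d. Pr ?i j * abs a * Qr j ?k) * Xm e1 e2 r s False (d \<le> k)
                + Xm e1 e2 r s (d \<le> i) True * (\<Sum>j<d. Pr ?i j * abs a * Qr j ?k) * Xm e1 e2 r s True (d \<le> k))"
        by (rule blocksum[OF i k])
      also have "(\<Sum>j<d. Pr ?i j * abs a * Qr j ?k) = hq e1 e2 ?g0 ?g1 ?g2 ?g3"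
      proof -
        have tm: "Pr ?i j * A * Qr j ?k = Pr ?i j * abs a0 * Qr j ?k + Pr ?i j * abs a1 * Qr j ?k * e1
                     + Pr ?i j * abs a2 * Qr j ?k * e2 + Pr ?i j * abs a3 * Qr j ?k * (e1 * e2)" if j: "j < d" for j
        proof -
          have c1: "e1 * Qr j ?k = Qr j ?k * e1" and c2: "e2 * Qr j ?k = Qr j ?k * e2"
            using cQ[OF j kk] by auto
          have c1': "e1 * (Qr j ?k * x) = Qr j ?k * (e1 * x)" for x by (metis c1 mult.assoc)
          have c2': "e2 * (Qr j ?k * x) = Qr j ?k * (e2 * x)" for x by (metis c2 mult.assoc)
          show ?thesis unfolding A_def
            by (simp only: distrib_left distrib_right mult.assoc c1 c2 c1' c2')
        qed
        have "(\<Sum>j<d. Pr ?i j * abs a * Qr j ?k) = (\<Sum>j<d. Pr ?i j * abs a0 * Qr j ?k + Pr ?i j * abs a1 * Qr j ?k * e1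
                     + Pr ?i j * abs a2 * Qr j ?k * e2 + Pr ?i j * abs a3 * Qr j ?k * (e1 * e2))"
          unfolding absa by (rule sum.cong[OF refl]) (simp add: tm)
        also have "\<dots> = (\<Sum>j<d. Pr ?i j * abs a0 * Qr j ?k) + (\<Sum>j<d. Pr ?i j * abs a1 * Qr j ?k) * e1
                     + (\<Sum>j<d. Pr ?i j * abs a2 * Qr j ?k) * e2 + (\<Sum>j<d. Pr ?i j * abs a3 * Qr j ?k) * (e1 * e2)"
          by (simp add: sum.distrib sum_distrib_right)
        also have "\<dots> = hq e1 e2 ?g0 ?g1 ?g2 ?g3"
          unfolding hq_def Gsc[OF a0 ii kk] Gsc[OF a1 ii kk] Gsc[OF a2 ii kk] Gsc[OF a3 ii kk] ..
        finally show ?thesis .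
      qed
      also have "sc (1/4) * (Xm e1 e2 r s (d \<le> i) False * hq e1 e2 ?g0 ?g1 ?g2 ?g3 * Xm e1 e2 r s False (d \<le> k)
                + Xm e1 e2 r s (d \<le> i) True * hq e1 e2 ?g0 ?g1 ?g2 ?g3 * Xm e1 e2 r s True (d \<le> k))
             = sc (expv r s (d \<le> i) (d \<le> k) ?g0 ?g1 ?g2 ?g3)" by (rule BI)
      finally show ?thesis by (simp add: rep_sc)
    qed
    have rhs: "blk d
                 (madd (phi d P Q a0) (msmul s (phi d P Q a1)))
                 (msmul r (madd (phi d P Q a2) (msmul s (phi d P Q a3))))
                 (msub (phi d P Q a2) (msmul s (phi d P Q a3)))
                 (msub (phi d P Q a0) (msmul s (phi d P Q a1))) i k
        = cl_scalar (expv r s (d \<le> i) (d \<le> k) (phi d P Q a0 (im d i) (im d k) {}) (phi d P Q a1 (im d i) (im d k) {})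
                                (phi d P Q a2 (im d i) (im d k) {}) (phi d P Q a3 (im d i) (im d k) {}))"
      if i: "i < 2*d" and k: "k < 2*d" for i k
    proof -
      have ii: "im d i < d" and kk: "im d k < d" using imd i k by auto
      have sc_t: "phi d P Q y (im d i) (im d k) = cl_scalar (phi d P Q y (im d i) (im d k) {})" if "in_C n y" for y
        using phi_scalar that ii kk scalar_eq unfolding mat_scalar_def by blast
      show ?thesis by (rule rhs_entry[where Fa = "phi d P Q a0" and Fb = "phi d P Q a1" and Fc = "phi d P Q a2"
          and Fd = "phi d P Q a3", OF i k sc_t[OF a0] sc_t[OF a1] sc_t[OF a2] sc_t[OF a3]])
    qed
    show ?thesis
      unfolding meq_def mat_scalar_def using entry rhs by (simp add: cl_is_scalar_def cl_scalar_def)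
  qed
  show ?thesis using P1 P2 P3 P4 P5 P6 by blast
qed


end
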